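(* Let $0<q<\infty$ and $\frac{q}{q+1}<p<\infty$, and let $r=\frac{pq}{pq+p-q}$ (equivalently $\frac1p+\frac1r=1+\frac1q$). Then $$\left(\frac{\sin_{p,q}x}{x}\right)^p+\left(\frac{\operatorname{tam}_{p,q}x}{x}\right)^r>2 \quad \text{for all } x\in\left(0,\tfrac{\pi_{p,q}}{2}\right),$$ and $$\left(\frac{\sinh_{p,q}x}{x}\right)^p+\left(\frac{\operatorname{tamh}_{p,q}x}{x}\right)^r>2 \quad \text{for all } x\in\left(0,\tfrac{\pi_{r,q}}{2}\right).$$
   Context: For $0<q<\infty$ and $\frac{q}{q+1}<p<\infty$: let $F_{p,q}(y)=\int_0^y (1-t^q)^{-1/p}\,dt$ for $y\in[0,1)$ and $\pi_{p,q}=2\int_0^1(1-t^q)^{-1/p}\,dt\in(0,\infty]$ (it equals $\infty$ when $p\le 1$). The function $\sin_{p,q}:[0,\pi_{p,q}/2)\to[0,1)$ is the inverse of $F_{p,q}$, $\cos_{p,q}x=\frac{d}{dx}\sin_{p,q}x$, and $\operatorname{tam}_{p,q}x=\sin_{p,q}x/\cos_{p,q}^{p/q}x$. Let $G_{p,q}(y)=\int_0^y(1+t^q)^{-1/p}\,dt$ for $y\in[0,\infty)$; its range is $[0,\pi_{r,q}/2)$ with $r=\frac{pq}{pq+p-q}$ (which also satisfies $\frac{q}{q+1}<r<\infty$). The function $\sinh_{p,q}:[0,\pi_{r,q}/2)\to[0,\infty)$ is the inverse of $G_{p,q}$, $\cosh_{p,q}x=\frac{d}{dx}\sinh_{p,q}x$,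 and $\operatorname{tamh}_{p,q}x=\sinh_{p,q}x/\cosh_{p,q}^{p/q}x$. *)

theory Defs
  imports "HOL-Analysis.Analysis"
begin

definition F_pq :: "real \<Rightarrow> real \<Rightarrow> real \<Rightarrow> real" where
  "F_pq p q y = integral {0..y} (\<lambda>t. (1 - t powr q) powr (-1/p))"

definition pi_pq :: "real \<Rightarrow> real \<Rightarrow> ennreal" where
  "pi_pq p q = 2 * (\<integral>\<^sup>+ t. indicator {0..<1} t * ennreal ((1 - t powr q) powr (-1/p)) \<partial>lborel)"

definition sin_pq :: "real \<Rightarrow> real \<Rightarrow> real \<Rightarrow> real" where
  "sin_pq p q x = (THE y. y \<in> {0..<1} \<and> F_pq p q y = x)"

definition cos_pq :: "real \<Rightarrow> real \<Rightarrow> real \<Rightarrow> real" where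
  "cos_pq p q x = deriv (sin_pq p q) x"

definition tam_pq :: "real \<Rightarrow> real \<Rightarrow> real \<Rightarrow> real" where
  "tam_pq p q x = sin_pq p q x / (cos_pq p q x) powr (p / q)"

definition G_pq :: "real \<Rightarrow> real \<Rightarrow> real \<Rightarrow> real" where
  "G_pq p q y = integral {0..y} (\<lambda>t. (1 + t powr q) powr (-1/p))"

definition sinh_pq :: "real \<Rightarrow> real \<Rightarrow> real \<Rightarrow> real" where
  "sinh_pq p q x = (THE y. y \<ge> 0 \<and> G_pq p q y = x)"

definition cosh_pq :: "real \<Rightarrow> real \<Rightarrow> real \<Rightarrow> real" where
  "cosh_pq p q x = deriv (sinh_pq p q) x"

definition tamh_pq :: "real \<Rightarrow> real \<Rightarrow> real \<Rightarrow> real" where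
  "tamh_pq p q x = sinh_pq p q x / (cosh_pq p q x) powr (p / q)"

end

theory Submission
  imports Defs
begin

lemma amgm_strict:
  fixes s u :: real
  assumes s: "0 < s" "s < 1" and u: "0 < u" "u \<noteq> 1"
  shows "u powr (1 - s) < (1 - s) * u + s"
proof -
  define g where "g = (\<lambda>z::real. (1 - s) * z + s - z powr (1 - s))"
  have der: "(g has_real_derivative ((1 - s) - (1 - s) * z powr (-s))) (at z)" if "z > 0" for z
    unfolding g_def using that
    by (auto intro!: derivative_eq_intros simp: algebra_simps)
  have g1: "g 1 = 0" by (simp add: g_def)
  have cont: "continuous_on {a..b} g" if "0 < a" for a b
    using that by (intro has_real_derivative_imp_continuous_on[where f'="\<lambda>z. (1 - s) - (1 - s) * z powr (-s)"] der) auto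
  show ?thesis
  proof (cases "u > 1")
    case True
    have "g 1 < g u"
    proof (rule DERIV_pos_imp_increasing_open[OF True])
      fix z assume z: "1 < z" "z < u"
      have "z powr (-s) < 1" using z s by (intro powr_less_one) auto
      then show "\<exists>y. (g has_real_derivative y) (at z) \<and> 0 < y"
        using der[of z] z s mult_pos_pos[of "1-s" "1 - z powr (-s)"]
        by (intro exI[of _ "(1 - s) - (1 - s) * z powr (-s)"]) (auto simp: algebra_simps)
    qed (use cont in auto)
    then show ?thesis using g1 by (simp add: g_def)
  next
    case False
    with u have ul: "u < 1" by auto
    have "g 1 < g u"
    proof (rule DERIV_neg_imp_decreasing_open[OF ul])
      fix z assume z: "u < z" "z < 1"
      have "1 powr (-s) < z powr (-s)" using z s u by (intro powr_less_mono2_neg) auto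
      then show "\<exists>y. (g has_real_derivative y) (at z) \<and> y < 0"
        using der[of z] z s u mult_pos_pos[of "1-s" "z powr (-s) - 1"]
        by (intro exI[of _ "(1 - s) - (1 - s) * z powr (-s)"]) (auto simp: algebra_simps)
    qed (use cont u in auto)
    then show ?thesis using g1 by (simp add: g_def)
  qed
qed


lemma sum_gt_2:
  fixes A B :: real
  assumes "A > 0" "B > 0" "A * B > 1"
  shows "A + B > 2"
proof (rule ccontr)
  assume "\<not> A + B > 2"
  then have "A + B \<le> 2" by simp
  have "0 \<le> (A - B)^2" by simp
  then have "4 * (A * B) \<le> (A + B)^2" by (simp add: power2_eq_square algebra_simps)
  also have "\<dots> \<le> 2^2" using \<open>A + B \<le> 2\<close> assms by (intro power_mono) auto
  finally show False using assms by simp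
qed

lemma final_ineq:
  fixes p q r x y u :: real
  assumes q: "0 < q" and pq: "q / (q + 1) < p" and r: "r = p * q / (p * q + p - q)"
    and x: "0 < x" and y: "0 < y" and u: "0 < u"
    and key: "x < y * u powr (- (1 / (p * (q + 1))))"
  shows "(y / x) powr p + ((y / (u powr (1 / p)) powr (p / q)) / x) powr r > 2"
proof -
  define a where "a = 1 / (p * (q + 1))"
  have p: "0 < p" using pq q by (smt (verit) divide_pos_pos)
  have D: "0 < p * q + p - q" using pq q by (simp add: field_simps)
  have rpos: "0 < r" unfolding r using D p q by simp
  define w where "w = y / x"
  have w: "0 < w" unfolding w_def using x y by simp
  have "u powr a * x < u powr a * (y * u powr (-a))" using key u unfolding a_def by simp
  also have "\<dots> = y" using u by (simp add: powr_minus)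
  finally have "u powr a * x < y" .
  then have wa: "u powr a < w" unfolding w_def using x by (simp add: field_simps)
  have c: "(u powr (1 / p)) powr (p / q) = u powr (1 / q)" using p by (simp add: powr_powr)
  have t: "(y / (u powr (1 / p)) powr (p / q)) / x = w * u powr (- (1 / q))"
    unfolding c w_def by (simp add: powr_minus field_simps)
  have B: "(w * u powr (- (1 / q))) powr r = w powr r * u powr (- (r / q))"
    using w u by (simp add: powr_mult powr_powr)
  have pr: "p + r = p * (p * (q+1)) / (p*q+p-q)" unfolding r using D by (simp add: field_simps)
  have ar1: "a * (p + r) = p / (p*q+p-q)" unfolding pr a_def using p q D by simp
  have ar2: "r / q = p / (p*q+p-q)" unfolding r using q by simp
  have ar: "a * (p + r) = r / q" using ar1 ar2 by simp
  have "1 = (u powr a) powr (p + r) * u powr (- (r / q))"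
    using u by (simp add: powr_powr ar powr_minus)
  also have "\<dots> < w powr (p + r) * u powr (- (r / q))"
    using wa u p rpos by (intro mult_strict_right_mono powr_less_mono2) auto
  also have "\<dots> = w powr p * (w powr r * u powr (- (r / q)))"
    by (simp add: powr_add)
  finally have prod: "1 < w powr p * (w powr r * u powr (- (r / q)))" .
  show ?thesis
    unfolding t B w_def[symmetric]
    by (rule sum_gt_2) (use w u prod in auto)
qed


lemma inverse_deriv:
  fixes \<Phi> \<phi> g :: "real \<Rightarrow> real" and D :: "real set"
  assumes g: "\<And>x. g x = (THE y. y \<in> D \<and> \<Phi> y = x)"
    and mono: "strict_mono_on D \<Phi>"
    and d: "0 < d" "cball yc d \<subseteq> D"
    and der: "\<And>z. z \<in> cball yc d \<Longrightarrow> (\<Phi> has_real_derivative \<phi> z) (at z)"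
    and nz: "\<phi> yc \<noteq> 0"
  shows "g (\<Phi> yc) = yc" "(g has_real_derivative inverse (\<phi> yc)) (at (\<Phi> yc))"
proof -
  have inj: "inj_on \<Phi> D" using mono by (rule strict_mono_on_imp_inj_on)
  have gP: "g (\<Phi> z) = z" if "z \<in> D" for z
    unfolding g using that inj by (auto intro!: the_equality dest: inj_onD)
  have yc: "yc \<in> D" using d by auto
  then show g0: "g (\<Phi> yc) = yc" by (rule gP)
  have incb: "z \<in> cball yc d" if "\<bar>z - yc\<bar> \<le> d" for z
    using that by (simp add: dist_real_def abs_minus_commute)
  have contg: "isCont g (\<Phi> yc)"
    by (rule isCont_inverse_function[OF d(1)]) (use incb gP d der[THEN DERIV_isCont] in blast)+
  have m1: "yc - d \<in> cball yc d" "yc + d \<in> cball yc d" using d by (auto simp: dist_real_def)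
  have ab: "\<Phi> (yc - d) < \<Phi> yc" "\<Phi> yc < \<Phi> (yc + d)"
    using m1 d yc by (auto intro!: strict_mono_onD[OF mono])
  have contP: "continuous_on {yc - d..yc + d} \<Phi>"
    by (rule continuous_at_imp_continuous_on) (use der[THEN DERIV_isCont] incb in auto)
  have inv: "\<Phi> (g w) = w" if w: "\<Phi> (yc - d) < w" "w < \<Phi> (yc + d)" for w
  proof -
    obtain z where z: "yc - d \<le> z" "z \<le> yc + d" "\<Phi> z = w"
      using IVT'[of \<Phi> "yc - d" w "yc + d"] w d contP by auto
    then have "z \<in> D" using d incb by auto
    then show ?thesis using gP z by auto
  qed
  show "(g has_real_derivative inverse (\<phi> yc)) (at (\<Phi> yc))"
    by (rule DERIV_inverse_function[OF _ nz ab inv contg]) (use g0 der d in auto)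
qed


lemma powr_q_lt1: "0 < (q::real) \<Longrightarrow> 0 \<le> t \<Longrightarrow> t < 1 \<Longrightarrow> t powr q < 1"
  using powr_less_mono2[of q t 1] by simp

lemma cont_fs:
  fixes e q b :: real
  assumes q: "0 < q" and b: "b < 1"
  shows "continuous_on {0..b} (\<lambda>t. (1 - t powr q) powr e)"
proof -
  have c1: "continuous_on {0..b} (\<lambda>t::real. t powr q)"
    by (rule continuous_on_powr') (use q in \<open>auto intro: continuous_intros\<close>)
  have "\<forall>t\<in>{0..b}. 0 < 1 - t powr q" using powr_q_lt1[OF q] b by fastforce
  then show ?thesis
    by (intro continuous_on_powr' continuous_intros c1) auto
qed

lemma cont_fh:
  fixes e q b :: real
  assumes q: "0 < q"
  shows "continuous_on {0..b} (\<lambda>t. (1 + t powr q) powr e)"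
proof -
  have c1: "continuous_on {0..b} (\<lambda>t::real. t powr q)"
    by (rule continuous_on_powr') (use q in \<open>auto intro: continuous_intros\<close>)
  have "\<forall>t\<in>{0..b}. 0 < 1 + t powr q" by (simp add: add_pos_nonneg)
  then show ?thesis
    by (intro continuous_on_powr' continuous_intros c1) auto
qed

lemma integral_deriv_at:
  fixes f :: "real \<Rightarrow> real"
  assumes "continuous_on {0..b} f" "0 < z" "z < b"
  shows "((\<lambda>y. integral {0..y} f) has_real_derivative f z) (at z)"
proof -
  have "((\<lambda>y. integral {0..y} f) has_real_derivative f z) (at z within {0..b})"
    using assms by (intro integral_has_real_derivative) auto
  moreover have "at z within {0..b} = at z"
    using assms by (intro at_within_interior) auto
  ultimately show ?thesis by simp
qed

lemma integral_cont_on: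
  fixes f :: "real \<Rightarrow> real"
  assumes "continuous_on {0..b} f"
  shows "continuous_on {0..b} (\<lambda>y. integral {0..y} f)"
  by (rule DERIV_continuous_on[OF integral_has_real_derivative[OF assms]])

lemma F_deriv:
  assumes q: "0 < q" and z: "0 < z" "z < 1"
  shows "(F_pq p q has_real_derivative (1 - z powr q) powr (-1/p)) (at z)"
  unfolding F_pq_def[abs_def]
  by (rule integral_deriv_at[OF cont_fs[OF q, where b="(z+1)/2" and e="-1/p"]]) (use z in auto)

lemma F_cont:
  assumes q: "0 < q" and b: "b < 1"
  shows "continuous_on {0..b} (F_pq p q)"
  unfolding F_pq_def[abs_def] by (rule integral_cont_on[OF cont_fs[OF q b, where e="-1/p"]])

lemma G_deriv:
  assumes q: "0 < q" and z: "0 < z"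
  shows "(G_pq p q has_real_derivative (1 + z powr q) powr (-1/p)) (at z)"
  unfolding G_pq_def[abs_def]
  by (rule integral_deriv_at[OF cont_fh[OF q, where b="z+1" and e="-1/p"]]) (use z in auto)

lemma G_cont:
  assumes q: "0 < q"
  shows "continuous_on {0..b} (G_pq p q)"
  unfolding G_pq_def[abs_def] by (rule integral_cont_on[OF cont_fh[OF q, where e="-1/p"]])

lemma F_0: "F_pq p q 0 = 0" by (simp add: F_pq_def)
lemma G_0: "G_pq p q 0 = 0" by (simp add: G_pq_def)

lemma F_mono:
  assumes q: "0 < q"
  shows "strict_mono_on {0..<1} (F_pq p q)"
proof (rule strict_mono_onI)
  fix a b :: real assume ab: "a \<in> {0..<1}" "b \<in> {0..<1}" "a < b"
  show "F_pq p q a < F_pq p q b"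
  proof (rule DERIV_pos_imp_increasing_open[OF ab(3)])
    fix z assume z: "a < z" "z < b"
    have "0 < 1 - z powr q" using powr_q_lt1[OF q, of z] z ab by auto
    then show "\<exists>y. (F_pq p q has_real_derivative y) (at z) \<and> 0 < y"
      using F_deriv[OF q, of z p] z ab by (intro exI[of _ "(1 - z powr q) powr (-1/p)"]) auto
  next
    show "continuous_on {a..b} (F_pq p q)"
      by (rule continuous_on_subset[OF F_cont[OF q, of b p]]) (use ab in auto)
  qed
qed

lemma G_mono:
  assumes q: "0 < q"
  shows "strict_mono_on {0..} (G_pq p q)"
proof (rule strict_mono_onI)
  fix a b :: real assume ab: "a \<in> {0..}" "b \<in> {0..}" "a < b"
  show "G_pq p q a < G_pq p q b"
  proof (rule DERIV_pos_imp_increasing_open[OF ab(3)])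
    fix z assume z: "a < z" "z < b"
    have "0 < 1 + z powr q" by (simp add: add_pos_nonneg)
    then show "\<exists>y. (G_pq p q has_real_derivative y) (at z) \<and> 0 < y"
      using G_deriv[OF q, of z p] z ab by (intro exI[of _ "(1 + z powr q) powr (-1/p)"]) auto
  next
    show "continuous_on {a..b} (G_pq p q)"
      by (rule continuous_on_subset[OF G_cont[OF q, of b p]]) (use ab in auto)
  qed
qed


lemma key_F:
  fixes p q y :: real
  assumes q: "0 < q" and pq: "q / (q + 1) < p" and y: "0 < y" "y < 1"
  shows "F_pq p q y < y * (1 - y powr q) powr (- (1 / (p * (q + 1))))"
proof -
  define a where "a = 1 / (p * (q + 1))"
  define s where "s = a * q"
  have p: "0 < p" using pq q by (smt (verit) divide_pos_pos)
  have s01: "0 < s" "s < 1" unfolding s_def a_def using p q pq by (auto simp: field_simps)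
  have ap1: "a + s = a * (q + 1)" by (simp add: s_def algebra_simps)
  have ap2: "a * (q + 1) = 1 / p" unfolding a_def using q by simp
  have ap: "a + s = 1 / p" using ap1 ap2 by simp
  define h where "h = (\<lambda>t. t * (1 - t powr q) powr (-a) - F_pq p q t)"
  have h0: "h 0 = 0" by (simp add: h_def F_0)
  have cont: "continuous_on {0..y} h"
    unfolding h_def using y
    by (intro continuous_intros cont_fs[OF q] F_cont[OF q]) auto
  have "h 0 < h y"
  proof (rule DERIV_pos_imp_increasing_open[OF y(1) _ cont])
    fix t assume t: "0 < t" "t < y"
    define u where "u = 1 - t powr q"
    have tq: "t powr q < 1" using powr_q_lt1[OF q, of t] t y by auto
    have u: "0 < u" "u \<noteq> 1" using tq t unfolding u_def by auto
    have d1: "((\<lambda>t. t powr q) has_real_derivative q * t powr (q - 1)) (at t)"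
      using t(1) by (rule has_real_derivative_powr)
    have d2: "((\<lambda>t. 1 - t powr q) has_real_derivative 0 - q * t powr (q - 1)) (at t)"
      by (rule DERIV_diff[OF DERIV_const d1])
    have d3: "((\<lambda>t. (1 - t powr q) powr (-a)) has_real_derivative
        (-a) * (1 - t powr q) powr (-a - real 1) * (0 - q * t powr (q - 1))) (at t)"
      by (rule DERIV_fun_powr[OF d2]) (use u in \<open>simp add: u_def\<close>)
    note d4 = DERIV_mult[OF DERIV_ident d3]
    note d5 = DERIV_diff[OF d4 F_deriv[OF q, of t p]]
    define P where "P = u powr (-a - 1)"
    define W where "W = u powr (1 - s)"
    have e1: "t powr (q - 1) * t = 1 - u"
    proof -
      have "t powr (q - 1) * t = t powr (q - 1) * t powr 1" using t by simp
      also have "\<dots> = t powr (q - 1 + 1)" by (rule powr_add[symmetric])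
      finally show ?thesis by (simp add: u_def)
    qed
    have e2: "u powr (-a) = P * u"
    proof -
      have "P * u = u powr (-a - 1) * u powr 1" using u by (simp add: P_def)
      also have "\<dots> = u powr (-a - 1 + 1)" by (rule powr_add[symmetric])
      finally show ?thesis by simp
    qed
    have e3: "u powr (-1/p) = P * W"
    proof -
      have "P * W = u powr (-a - 1 + (1 - s))" unfolding P_def W_def by (rule powr_add[symmetric])
      also have "-a - 1 + (1 - s) = -1/p" using ap by simp
      finally show ?thesis by simp
    qed
    have P: "0 < P" unfolding P_def using u by simp
    have "W < (1 - s) * u + s" unfolding W_def by (rule amgm_strict[OF s01 u])
    then have pos: "0 < P * ((1 - s) * u + s - W)" using P by simp
    have P': "u powr (-a - real 1) = P" by (simp add: P_def)
    have E: "1 * (1 - t powr q) powr (-a) + (-a) * (1 - t powr q) powr (-a - real 1) * (0 - q * t powr (q - 1)) * t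
         - (1 - t powr q) powr (-1/p) = P * ((1 - s) * u + s - W)"
    proof -
      have "1 * (1 - t powr q) powr (-a) + (-a) * (1 - t powr q) powr (-a - real 1) * (0 - q * t powr (q - 1)) * t
         - (1 - t powr q) powr (-1/p) = P * u + a * P * q * (t powr (q - 1) * t) - P * W"
        unfolding u_def[symmetric] P' e2 e3 by (simp add: algebra_simps)
      also have "\<dots> = P * ((1 - s) * u + s - W)" unfolding e1 s_def by (simp add: algebra_simps)
      finally show ?thesis .
    qed
    show "\<exists>d. (h has_real_derivative d) (at t) \<and> 0 < d"
      using d5 pos E t y unfolding h_def by auto
  qed
  then show ?thesis using h0 unfolding h_def a_def by simp
qed

lemma key_G:
  fixes p q y :: real
  assumes q: "0 < q" and pq: "q / (q + 1) < p" and y: "0 < y"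
  shows "G_pq p q y < y * (1 + y powr q) powr (- (1 / (p * (q + 1))))"
proof -
  define a where "a = 1 / (p * (q + 1))"
  define s where "s = a * q"
  have p: "0 < p" using pq q by (smt (verit) divide_pos_pos)
  have s01: "0 < s" "s < 1" unfolding s_def a_def using p q pq by (auto simp: field_simps)
  have ap1: "a + s = a * (q + 1)" by (simp add: s_def algebra_simps)
  have ap2: "a * (q + 1) = 1 / p" unfolding a_def using q by simp
  have ap: "a + s = 1 / p" using ap1 ap2 by simp
  define h where "h = (\<lambda>t. t * (1 + t powr q) powr (-a) - G_pq p q t)"
  have h0: "h 0 = 0" by (simp add: h_def G_0)
  have cont: "continuous_on {0..y} h"
    unfolding h_def using y
    by (intro continuous_on_diff continuous_on_mult continuous_on_id cont_fh[OF q] G_cont[OF q])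
  have "h 0 < h y"
  proof (rule DERIV_pos_imp_increasing_open[OF y(1) _ cont])
    fix t assume t: "0 < t" "t < y"
    define u where "u = 1 + t powr q"
    have tq: "0 < t powr q" using t by simp
    have u: "0 < u" "u \<noteq> 1" using tq t unfolding u_def by (auto simp: add_pos_pos)
    have d1: "((\<lambda>t. t powr q) has_real_derivative q * t powr (q - 1)) (at t)"
      using t(1) by (rule has_real_derivative_powr)
    have d2: "((\<lambda>t. 1 + t powr q) has_real_derivative 0 + q * t powr (q - 1)) (at t)"
      by (rule DERIV_add[OF DERIV_const d1])
    have d3: "((\<lambda>t. (1 + t powr q) powr (-a)) has_real_derivative
        (-a) * (1 + t powr q) powr (-a - real 1) * (0 + q * t powr (q - 1))) (at t)"
      by (rule DERIV_fun_powr[OF d2]) (use u in \<open>simp add: u_def\<close>)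
    note d4 = DERIV_mult[OF DERIV_ident d3]
    note d5 = DERIV_diff[OF d4 G_deriv[OF q, of t p]]
    define P where "P = u powr (-a - 1)"
    define W where "W = u powr (1 - s)"
    have e1: "t powr (q - 1) * t = u - 1"
    proof -
      have "t powr (q - 1) * t = t powr (q - 1) * t powr 1" using t by simp
      also have "\<dots> = t powr (q - 1 + 1)" by (rule powr_add[symmetric])
      finally show ?thesis by (simp add: u_def)
    qed
    have e2: "u powr (-a) = P * u"
    proof -
      have "P * u = u powr (-a - 1) * u powr 1" using u by (simp add: P_def)
      also have "\<dots> = u powr (-a - 1 + 1)" by (rule powr_add[symmetric])
      finally show ?thesis by simp
    qed
    have e3: "u powr (-1/p) = P * W"
    proof -
      have "P * W = u powr (-a - 1 + (1 - s))" unfolding P_def W_def by (rule powr_add[symmetric])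
      also have "-a - 1 + (1 - s) = -1/p" using ap by simp
      finally show ?thesis by simp
    qed
    have P: "0 < P" unfolding P_def using u by simp
    have "W < (1 - s) * u + s" unfolding W_def by (rule amgm_strict[OF s01 u])
    then have pos: "0 < P * ((1 - s) * u + s - W)" using P by simp
    have P': "u powr (-a - real 1) = P" by (simp add: P_def)
    have E: "1 * (1 + t powr q) powr (-a) + (-a) * (1 + t powr q) powr (-a - real 1) * (0 + q * t powr (q - 1)) * t
         - (1 + t powr q) powr (-1/p) = P * ((1 - s) * u + s - W)"
    proof -
      have "1 * (1 + t powr q) powr (-a) + (-a) * (1 + t powr q) powr (-a - real 1) * (0 + q * t powr (q - 1)) * t
         - (1 + t powr q) powr (-1/p) = P * u - a * P * q * (t powr (q - 1) * t) - P * W"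
        unfolding u_def[symmetric] P' e2 e3 by (simp add: algebra_simps)
      also have "\<dots> = P * ((1 - s) * u + s - W)" unfolding e1 s_def by (simp add: algebra_simps)
      finally show ?thesis .
    qed
    show "\<exists>d. (h has_real_derivative d) (at t) \<and> 0 < d"
      using d5 pos E t y unfolding h_def by auto
  qed
  then show ?thesis using h0 unfolding h_def a_def by simp
qed


lemma pi_exists:
  fixes p q x :: real
  assumes q: "0 < q" and x: "0 < x" and lt: "2 * ennreal x < pi_pq p q"
  shows "\<exists>y. 0 \<le> y \<and> y < 1 \<and> x < F_pq p q y"
proof -
  define f where "f = (\<lambda>t::real. (1 - t powr q) powr (-1/p))"
  define yn where "yn = (\<lambda>n::nat. 1 - 1 / real (Suc n))"
  have yn: "0 \<le> yn n" "yn n < 1" for n unfolding yn_def by (auto simp: field_simps)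
  have ynm: "yn m \<le> yn n" if "m \<le> n" for m n
    unfolding yn_def using that by (auto simp: field_simps)
  have I: "(\<integral>\<^sup>+ t. indicator {0..yn n} t * ennreal (f t) \<partial>lborel) = ennreal (F_pq p q (yn n))" for n
  proof -
    have c: "continuous_on {0..yn n} f" unfolding f_def by (rule cont_fs[OF q yn(2)])
    have hi: "(f has_integral integral {0..yn n} f) {0..yn n}"
      using integrable_continuous_real[OF c] by (rule integrable_integral)
    have "(\<integral>\<^sup>+ t. ennreal (f t) * indicator {0..yn n} t \<partial>lborel) = ennreal (integral {0..yn n} f)"
      by (rule nn_integral_has_integral_lebesgue'[OF _ hi]) (simp add: f_def)
    then show ?thesis by (simp add: mult.commute F_pq_def f_def)
  qed
  have meas: "(\<lambda>t. indicator {0..yn n} t * ennreal (f t)) \<in> borel_measurable lborel" for n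
    unfolding f_def by measurable
  have inc: "incseq (\<lambda>n t. indicator {0..yn n} t * ennreal (f t))"
  proof (rule incseq_def[THEN iffD2], intro allI impI le_funI)
    fix m n :: nat and t :: real assume "m \<le> n"
    then have "yn m \<le> yn n" by (rule ynm)
    then show "indicator {0..yn m} t * ennreal (f t) \<le> indicator {0..yn n} t * ennreal (f t)"
      by (auto simp: indicator_def)
  qed
  have SUPeq: "(SUP n. indicator {0..yn n} t * ennreal (f t)) = indicator {0..<1} t * ennreal (f t)" for t
  proof (cases "0 \<le> t \<and> t < 1")
    case True
    then obtain n where n: "inverse (real (Suc n)) < 1 - t" using reals_Archimedean[of "1 - t"] by auto
    then have tn: "t \<le> yn n" unfolding yn_def by (simp add: field_simps inverse_eq_divide)
    show ?thesis
    proof (rule antisym)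
      show "(SUP n. indicator {0..yn n} t * ennreal (f t)) \<le> indicator {0..<1} t * ennreal (f t)"
        using True by (intro SUP_least) (auto simp: indicator_def)
      show "indicator {0..<1} t * ennreal (f t) \<le> (SUP n. indicator {0..yn n} t * ennreal (f t))"
        by (rule SUP_upper2[of n]) (use True tn in \<open>auto simp: indicator_def\<close>)
    qed
  next
    case False
    then have "t \<notin> {0..yn n}" for n using yn[of n] by auto
    then have a: "(\<lambda>n. indicator {0..yn n} t * ennreal (f t)) = (\<lambda>n. 0)" by (simp add: fun_eq_iff)
    have b: "indicator {0..<1} t * ennreal (f t) = 0" using False by simp
    show ?thesis unfolding a b by simp
  qed
  have mc: "(\<integral>\<^sup>+ t. indicator {0..<1} t * ennreal (f t) \<partial>lborel)
      = (SUP n. \<integral>\<^sup>+ t. indicator {0..yn n} t * ennreal (f t) \<partial>lborel)"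
    using nn_integral_monotone_convergence_SUP[OF inc meas] by (simp add: SUPeq)
  have "ennreal x < (\<integral>\<^sup>+ t. indicator {0..<1} t * ennreal (f t) \<partial>lborel)"
  proof (rule ccontr)
    assume "\<not> ?thesis"
    then have "(\<integral>\<^sup>+ t. indicator {0..<1} t * ennreal (f t) \<partial>lborel) \<le> ennreal x" by simp
    then have "pi_pq p q \<le> 2 * ennreal x" unfolding pi_pq_def f_def by (intro mult_left_mono) auto
    then show False using lt by simp
  qed
  then obtain n where "ennreal x < ennreal (F_pq p q (yn n))"
    unfolding mc I by (auto simp: less_SUP_iff)
  then have "x < F_pq p q (yn n)" using x by (simp add: ennreal_less_iff)
  then show ?thesis using yn[of n] by blast
qed


lemma phi_deriv:
  fixes q s :: real
  assumes q: "0 < q" and s: "0 < s" "s < 1"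
  shows "((\<lambda>s. s * (1 - s powr q) powr (-1/q)) has_real_derivative (1 - s powr q) powr (-1/q - 1)) (at s)"
proof -
  define u where "u = 1 - s powr q"
  have tq: "s powr q < 1" using powr_q_lt1[OF q, of s] s by auto
  have u: "0 < u" using tq unfolding u_def by auto
  have d1: "((\<lambda>t. t powr q) has_real_derivative q * s powr (q - 1)) (at s)"
    using s(1) by (rule has_real_derivative_powr)
  have d2: "((\<lambda>t. 1 - t powr q) has_real_derivative 0 - q * s powr (q - 1)) (at s)"
    by (rule DERIV_diff[OF DERIV_const d1])
  have d3: "((\<lambda>t. (1 - t powr q) powr (-1/q)) has_real_derivative
      (-1/q) * (1 - s powr q) powr (-1/q - real 1) * (0 - q * s powr (q - 1))) (at s)"
    by (rule DERIV_fun_powr[OF d2]) (use u in \<open>simp add: u_def\<close>)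
  note d4 = DERIV_mult[OF DERIV_ident d3]
  have e1: "s powr (q - 1) * s = 1 - u"
  proof -
    have "s powr (q - 1) * s = s powr (q - 1) * s powr 1" using s by simp
    also have "\<dots> = s powr (q - 1 + 1)" by (rule powr_add[symmetric])
    finally show ?thesis by (simp add: u_def)
  qed
  define P where "P = u powr (-1/q - 1)"
  have e2: "u powr (-1/q) = P * u"
  proof -
    have "P * u = u powr (-1/q - 1) * u powr 1" using u by (simp add: P_def)
    also have "\<dots> = u powr (-1/q - 1 + 1)" by (rule powr_add[symmetric])
    finally show ?thesis by simp
  qed
  have P': "u powr (-1/q - real 1) = P" by (simp add: P_def)
  have "1 * (1 - s powr q) powr (-1/q) + (-1/q) * (1 - s powr q) powr (-1/q - real 1) * (0 - q * s powr (q - 1)) * s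
      = P * u + P * (q / q) * (s powr (q - 1) * s)"
    unfolding u_def[symmetric] P' e2 by (simp add: algebra_simps)
  also have "\<dots> = P" unfolding e1 using q by (simp add: algebra_simps)
  finally show ?thesis using d4 unfolding P_def u_def by simp
qed

lemma GF:
  fixes p q r \<sigma> :: real
  assumes q: "0 < q" and pq: "q / (q + 1) < p" and r: "r = p * q / (p * q + p - q)"
    and \<sigma>: "0 \<le> \<sigma>" "\<sigma> < 1"
  shows "G_pq p q (\<sigma> * (1 - \<sigma> powr q) powr (-1/q)) = F_pq r q \<sigma>"
proof (cases "\<sigma> = 0")
  case True
  then show ?thesis by (simp add: G_0 F_0)
next
  case False
  with \<sigma> have sp: "0 < \<sigma>" by auto
  define \<phi> where "\<phi> = (\<lambda>s::real. s * (1 - s powr q) powr (-1/q))"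
  have p: "0 < p" using pq q by (smt (verit) divide_pos_pos)
  have D: "0 < p * q + p - q" using pq q by (simp add: field_simps)
  have dphi: "(\<phi> has_real_derivative (1 - s powr q) powr (-1/q - 1)) (at s)" if "0 < s" "s < 1" for s
    unfolding \<phi>_def using phi_deriv[OF q that] .
  have phipos: "0 < \<phi> s" if "0 < s" "s < 1" for s
    using that powr_q_lt1[OF q, of s] unfolding \<phi>_def by (intro mult_pos_pos) auto
  have contphi: "continuous_on {0..\<sigma>} \<phi>"
    unfolding \<phi>_def by (intro continuous_on_mult continuous_on_id cont_fs[OF q \<sigma>(2)])
  have phimono: "\<phi> s \<le> \<phi> \<sigma>" if "0 \<le> s" "s \<le> \<sigma>" for s
  proof (cases "s = \<sigma>")
    case False
    with that have "s < \<sigma>" by auto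
    have "\<phi> s < \<phi> \<sigma>"
    proof (rule DERIV_pos_imp_increasing_open[OF \<open>s < \<sigma>\<close>])
      fix z assume z: "s < z" "z < \<sigma>"
      have "0 < 1 - z powr q" using powr_q_lt1[OF q, of z] z that \<sigma> by auto
      then show "\<exists>y. (\<phi> has_real_derivative y) (at z) \<and> 0 < y"
        using dphi[of z] z that \<sigma> by (intro exI[of _ "(1 - z powr q) powr (-1/q - 1)"]) auto
    next
      show "continuous_on {s..\<sigma>} \<phi>" by (rule continuous_on_subset[OF contphi]) (use that in auto)
    qed
    then show ?thesis by simp
  qed simp
  have phinn: "0 \<le> \<phi> s" if "0 \<le> s" "s < 1" for s
    using that unfolding \<phi>_def by simp
  define k where "k = (\<lambda>s. G_pq p q (\<phi> s) - F_pq r q s)"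
  have contk: "continuous_on {0..\<sigma>} k"
    unfolding k_def
  proof (intro continuous_on_diff F_cont[OF q \<sigma>(2)])
    show "continuous_on {0..\<sigma>} (\<lambda>x. G_pq p q (\<phi> x))"
      by (rule continuous_on_compose2[OF G_cont[OF q, where b="\<phi> \<sigma>"] contphi])
         (use phimono phinn \<sigma> in auto)
  qed
  have "k \<sigma> = k 0"
  proof (rule DERIV_isconst_end[OF sp contk])
    fix s assume s: "0 < s" "s < \<sigma>"
    then have s1: "s < 1" using \<sigma> by simp
    define u where "u = 1 - s powr q"
    have u: "0 < u" using powr_q_lt1[OF q, of s] s s1 unfolding u_def by auto
    note dk = DERIV_diff[OF DERIV_chain2[OF G_deriv[OF q phipos[OF s(1) s1], where p=p] dphi[OF s(1) s1]] F_deriv[OF q s(1) s1, of r]]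
    have ph: "\<phi> s powr q = (1 - u) * u powr (-1)"
      unfolding \<phi>_def u_def[symmetric] using s u
      by (simp add: powr_mult powr_powr u_def)
    have "1 + \<phi> s powr q = u powr (-1)" unfolding ph using u
      by (simp add: powr_minus field_simps)
    then have "(1 + \<phi> s powr q) powr (-1/p) = (u powr (-1)) powr (-1/p)" by (simp only:)
    also have "\<dots> = u powr (1/p)" unfolding powr_powr by simp
    finally have "(1 + \<phi> s powr q) powr (-1/p) = u powr (1/p)" .
    then have "(1 + \<phi> s powr q) powr (-1/p) * (1 - s powr q) powr (-1/q - 1) = u powr (1/p + (-1/q - 1))"
      unfolding u_def[symmetric] by (simp add: powr_add)
    also have "1/p + (-1/q - 1) = -1/r"
      unfolding r using p q D by (simp add: field_simps)
    finally have "(1 + \<phi> s powr q) powr (-1/p) * (1 - s powr q) powr (-1/q - 1) - (1 - s powr q) powr (-1/r) = 0"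
      by (simp add: u_def)
    then show "(k has_real_derivative 0) (at s)" using dk unfolding k_def by simp
  qed
  then show ?thesis unfolding k_def \<phi>_def by (simp add: G_0 F_0)
qed


theorem theorem3p1:
  fixes p q r :: real
  assumes "0 < q" and "q / (q + 1) < p"
    and "r = p * q / (p * q + p - q)"
  shows "(\<forall>x. 0 < x \<and> 2 * ennreal x < pi_pq p q \<longrightarrow>
            (sin_pq p q x / x) powr p + (tam_pq p q x / x) powr r > 2)
       \<and> (\<forall>x. 0 < x \<and> 2 * ennreal x < pi_pq r q \<longrightarrow>
            (sinh_pq p q x / x) powr p + (tamh_pq p q x / x) powr r > 2)"
proof (intro conjI allI impI; elim conjE)
  note q = assms(1) and pq = assms(2) and r = assms(3)
  fix x :: real assume x: "0 < x" and lt: "2 * ennreal x < pi_pq p q"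
  obtain y1 where y1: "0 \<le> y1" "y1 < 1" "x < F_pq p q y1" using pi_exists[OF q x lt] by blast
  obtain y0 where y0: "0 \<le> y0" "y0 \<le> y1" "F_pq p q y0 = x"
    using IVT'[of "F_pq p q" 0 x y1] y1 x F_cont[OF q y1(2), of p] by (auto simp: F_0)
  have y0p: "0 < y0" using y0 x by (cases "y0 = 0") (auto simp: F_0)
  have y01: "y0 < 1" using y0 y1 by simp
  define d where "d = min y0 (1 - y0) / 2"
  have d: "0 < d" using y0p y01 unfolding d_def by simp
  have cb: "z \<in> cball y0 d \<Longrightarrow> 0 < z \<and> z < 1" for z
    using y0p y01 unfolding d_def by (auto simp: dist_real_def abs_if split: if_splits)
  define u where "u = 1 - y0 powr q"
  have u: "0 < u" using powr_q_lt1[OF q y0(1) y01] unfolding u_def by simp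
  note inv = inverse_deriv[where g="sin_pq p q" and \<Phi>="F_pq p q" and D="{0..<1}"
      and \<phi>="\<lambda>z. (1 - z powr q) powr (-1/p)" and yc=y0 and d=d]
  have inv1: "sin_pq p q (F_pq p q y0) = y0"
    "(sin_pq p q has_real_derivative inverse ((1 - y0 powr q) powr (-1/p))) (at (F_pq p q y0))"
  proof -
    have h1: "cball y0 d \<subseteq> {0..<1}" using cb by fastforce
    have h2: "(F_pq p q has_real_derivative (\<lambda>z. (1 - z powr q) powr (-1/p)) z) (at z)"
      if "z \<in> cball y0 d" for z using cb[OF that] F_deriv[OF q] by simp
    have h3: "(\<lambda>z. (1 - z powr q) powr (-1/p)) y0 \<noteq> 0" using u unfolding u_def by simp
    show "sin_pq p q (F_pq p q y0) = y0"
      "(sin_pq p q has_real_derivative inverse ((1 - y0 powr q) powr (-1/p))) (at (F_pq p q y0))"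
      using inv[OF sin_pq_def F_mono[OF q] d h1 h2 h3] by simp_all
  qed
  have s: "sin_pq p q x = y0" using inv1(1) y0 by simp
  have c: "cos_pq p q x = u powr (1/p)"
    unfolding cos_pq_def using DERIV_imp_deriv[OF inv1(2)] y0 u
    by (simp add: u_def powr_minus)
  have key: "x < y0 * u powr (- (1 / (p * (q + 1))))"
    using key_F[OF q pq y0p y01] y0 unfolding u_def by simp
  show "(sin_pq p q x / x) powr p + (tam_pq p q x / x) powr r > 2"
    unfolding tam_pq_def s c using final_ineq[OF q pq r x y0p u key] .
next
  note q = assms(1) and pq = assms(2) and r = assms(3)
  fix x :: real assume x: "0 < x" and lt: "2 * ennreal x < pi_pq r q"
  obtain \<sigma> where \<sigma>: "0 \<le> \<sigma>" "\<sigma> < 1" "x < F_pq r q \<sigma>" using pi_exists[OF q x lt] by blast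
  define Y where "Y = \<sigma> * (1 - \<sigma> powr q) powr (-1/q)"
  have Y: "0 \<le> Y" "x < G_pq p q Y" using GF[OF q pq r \<sigma>(1,2)] \<sigma> unfolding Y_def by auto
  obtain y0 where y0: "0 \<le> y0" "y0 \<le> Y" "G_pq p q y0 = x"
    using IVT'[of "G_pq p q" 0 x Y] Y x G_cont[OF q, where p=p and b=Y] by (auto simp: G_0)
  have y0p: "0 < y0" using y0 x by (cases "y0 = 0") (auto simp: G_0)
  define d where "d = y0 / 2"
  have d: "0 < d" using y0p unfolding d_def by simp
  have cb: "z \<in> cball y0 d \<Longrightarrow> 0 < z" for z
    using y0p unfolding d_def by (auto simp: dist_real_def abs_if split: if_splits)
  define u where "u = 1 + y0 powr q"
  have u: "0 < u" unfolding u_def by (simp add: add_pos_nonneg)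
  have sdef: "sinh_pq p q x = (THE y. y \<in> {0..} \<and> G_pq p q y = x)" for x
    by (simp add: sinh_pq_def)
  note inv = inverse_deriv[where g="sinh_pq p q" and \<Phi>="G_pq p q" and D="{0..}"
      and \<phi>="\<lambda>z. (1 + z powr q) powr (-1/p)" and yc=y0 and d=d]
  have inv1: "sinh_pq p q (G_pq p q y0) = y0"
    "(sinh_pq p q has_real_derivative inverse ((1 + y0 powr q) powr (-1/p))) (at (G_pq p q y0))"
  proof -
    have h1: "cball y0 d \<subseteq> {0..}" using cb by (auto intro: less_imp_le)
    have h2: "(G_pq p q has_real_derivative (\<lambda>z. (1 + z powr q) powr (-1/p)) z) (at z)"
      if "z \<in> cball y0 d" for z using cb[OF that] G_deriv[OF q] by simp
    have h3: "(\<lambda>z. (1 + z powr q) powr (-1/p)) y0 \<noteq> 0" using u unfolding u_def by simp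
    show "sinh_pq p q (G_pq p q y0) = y0"
      "(sinh_pq p q has_real_derivative inverse ((1 + y0 powr q) powr (-1/p))) (at (G_pq p q y0))"
      using inv[OF sdef G_mono[OF q] d h1 h2 h3] by simp_all
  qed
  have s: "sinh_pq p q x = y0" using inv1(1) y0 by simp
  have c: "cosh_pq p q x = u powr (1/p)"
    unfolding cosh_pq_def using DERIV_imp_deriv[OF inv1(2)] y0 u
    by (simp add: u_def powr_minus)
  have key: "x < y0 * u powr (- (1 / (p * (q + 1))))"
    using key_G[OF q pq y0p] y0 unfolding u_def by simp
  show "(sinh_pq p q x / x) powr p + (tamh_pq p q x / x) powr r > 2"
    unfolding tamh_pq_def s c using final_ineq[OF q pq r x y0p u key] .
qed


end
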